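(* Let $m,n\ge2$ with $1/m+1/n<1$, let $\widetilde P(z)=((1+z)^n-1)/n$, and for $\lambda\ne0$ let $P_\lambda(z)=\dfrac{\frac1n((1+z)^n-1)+\lambda^{m+n}z^{m+n}}{1-\lambda^{m+n}z^{m+n}}$. Let $\Delta=\mathbb{D}(-\tfrac34,\tfrac34)$ be the open Euclidean disk of center $-3/4$ and radius $3/4$. (1) $\widetilde P(\overline\Delta)\subset\Delta\cup\{0\}$. (2) If $0<|\lambda|<1/(3n)$, then $P_\lambda(\overline\Delta)\subset\Delta\cup\{0\}$. In particular $\Delta$ lies in the Fatou set of $P_\lambda$, inside the Fatou component whose points converge under iteration of $P_\lambda$ to the parabolic fixed point $0$. *)

theory Defs
  imports "HOL-Analysis.Analysis"
begin

definition Ptilde :: "nat \<Rightarrow> complex \<Rightarrow> complex" where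
  "Ptilde n z = ((1 + z) ^ n - 1) / of_nat n"

definition Plam :: "nat \<Rightarrow> nat \<Rightarrow> complex \<Rightarrow> complex \<Rightarrow> complex" where
  "Plam m n lam z =
     (((1 + z) ^ n - 1) / of_nat n + lam ^ (m + n) * z ^ (m + n)) / (1 - lam ^ (m + n) * z ^ (m + n))"

definition Delta :: "complex set" where
  "Delta = ball (- 3 / 4) (3 / 4)"

end

theory Submission
  imports Defs
begin

lemma q_formula: "Re (-1/p) = - Re p / (cmod p)^2"
  by (simp add: Re_divide')

lemma dist_sq: "(dist (-3/4) p)^2 = (cmod p)^2 + 3/2 * Re p + 9/16"
proof -
  have "dist (-3/4) p = cmod (p + 3/4)" by (simp add: dist_norm norm_minus_commute)
  moreover have "(cmod (p+3/4))^2 = (Re p + 3/4)^2 + (Im p)^2" by (simp add: cmod_power2)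
  moreover have "(cmod p)^2 = (Re p)^2 + (Im p)^2" by (simp add: cmod_power2)
  ultimately show ?thesis by (simp add: power2_eq_square algebra_simps)
qed

lemma sq_less_iff: "(0::real) \<le> x \<Longrightarrow> 0 \<le> y \<Longrightarrow> x < y \<longleftrightarrow> x^2 < y^2"
  using power_less_imp_less_base[of x 2 y] power_strict_mono[of x y 2] by auto
lemma sq_le_iff: "(0::real) \<le> x \<Longrightarrow> 0 \<le> y \<Longrightarrow> x \<le> y \<longleftrightarrow> x^2 \<le> y^2"
  by (meson power2_le_imp_le power_mono)

lemma ball_char:
  assumes "p \<noteq> 0"
  shows "p \<in> ball (-3/4) (3/4) \<longleftrightarrow> Re (-1/p) > 2/3"
proof -
  have np: "(cmod p)^2 > 0" using assms by simp
  have "p \<in> ball (-3/4) (3/4) \<longleftrightarrow> (dist (-3/4) p)^2 < (3/4)^2"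
    using sq_less_iff[of "dist (-3/4) p" "3/4"] by simp
  also have "\<dots> \<longleftrightarrow> (cmod p)^2 + 3/2 * Re p < 0" using dist_sq[of p] by (simp add: power2_eq_square) linarith
  also have "\<dots> \<longleftrightarrow> - Re p / (cmod p)^2 > 2/3" using np by (simp add: field_simps) linarith
  finally show ?thesis unfolding q_formula .
qed

lemma cball_char:
  assumes "p \<noteq> 0"
  shows "p \<in> cball (-3/4) (3/4) \<longleftrightarrow> Re (-1/p) \<ge> 2/3"
proof -
  have np: "(cmod p)^2 > 0" using assms by simp
  have "p \<in> cball (-3/4) (3/4) \<longleftrightarrow> (dist (-3/4) p)^2 \<le> (3/4)^2"
    using sq_le_iff[of "dist (-3/4) p" "3/4"] by simp
  also have "\<dots> \<longleftrightarrow> (cmod p)^2 + 3/2 * Re p \<le> 0" using dist_sq[of p] by (simp add: power2_eq_square) linarith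
  also have "\<dots> \<longleftrightarrow> - Re p / (cmod p)^2 \<ge> 2/3" using np by (simp add: field_simps) linarith
  finally show ?thesis unfolding q_formula .
qed

lemma norm_le_q: "p \<noteq> 0 \<Longrightarrow> Re (-1/p) > 0 \<Longrightarrow> cmod p \<le> 1 / Re (-1/p)"
proof -
  assume "p \<noteq> 0" "Re (-1/p) > 0"
  have "Re (-1/p) \<le> cmod (-1/p)" by (rule complex_Re_le_cmod)
  also have "\<dots> = 1 / cmod p" by (simp add: norm_divide)
  finally show ?thesis using \<open>p \<noteq> 0\<close> \<open>Re (-1/p) > 0\<close> by (simp add: field_simps)
qed

lemma Re_inv_one_minus:
  assumes "W \<noteq> 1"
  shows "Re (1/(1-W)) = (1 + (1 - (cmod W)^2) / (cmod (1-W))^2) / 2"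
proof -
  have d: "(cmod (1-W))^2 > 0" using assms by simp
  have e1: "(cmod (1-W))^2 = (1 - Re W)^2 + (Im W)^2" by (simp add: cmod_power2)
  have e2: "(cmod W)^2 = (Re W)^2 + (Im W)^2" by (simp add: cmod_power2)
  have "Re (1/(1-W)) = (1 - Re W) / (cmod (1-W))^2" by (simp add: Re_divide')
  also have "\<dots> = (1 + (1 - (cmod W)^2) / (cmod (1-W))^2) / 2"
  proof -
    have h: "2*(1-Re W) = (cmod(1-W))^2 + (1 - (cmod W)^2)" unfolding e1 e2 by (simp add: power2_eq_square algebra_simps)
    show ?thesis using d h by (simp add: divide_simps)
  qed
  finally show ?thesis .
qed

lemma key_ineq:
  fixes w :: complex
  assumes "cmod w < 1" "n \<ge> 1"
  shows "real n * ((1 - (cmod (w^n))^2) / (cmod (1 - w^n))^2) \<ge> (1 - (cmod w)^2) / (cmod (1-w))^2"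
proof -
  define r where "r = cmod w"
  define A where "A = (\<Sum>i<n. w^i)"
  define Ar where "Ar = (\<Sum>i<n. r^i)"
  define S where "S = (\<Sum>i<n. (r^2)^i)"
  have r0: "0 \<le> r" "r < 1" using assms r_def by auto
  have w1: "w \<noteq> 1" using assms by auto
  have eA: "1 - w^n = (1 - w) * A" unfolding A_def by (rule one_diff_power_eq)
  have eS: "1 - (r^2)^n = (1 - r^2) * S" unfolding S_def by (rule one_diff_power_eq)
  have nA: "cmod A \<le> Ar" unfolding A_def Ar_def r_def
    by (rule order_trans[OF norm_sum]) (simp add: norm_power)
  have CS: "Ar^2 \<le> real n * S"
    using sum_squared_le_sum_of_squares[of "\<lambda>i. r^i" "{..<n}"]
    unfolding Ar_def S_def by (simp add: power_mult[symmetric] mult.commute power_even_eq)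
  have wn: "cmod (w^n) < 1" using assms by (simp add: norm_power power_less_one_iff) 
  hence "w^n \<noteq> 1" by auto
  hence A0: "A \<noteq> 0" using eA by auto
  have cA: "(cmod A)^2 > 0" using A0 by simp
  have c1: "(cmod (1-w))^2 > 0" using w1 by simp
  have S0: "S \<ge> 0" unfolding S_def by (intro sum_nonneg) simp
  have g: "1 - r^2 \<ge> 0" using r0 by (simp add: power_le_one)
  have "(1 - (cmod (w^n))^2) = (1 - r^2) * S" using eS by (simp add: r_def norm_power power_mult_distrib[symmetric] power_mult[symmetric] mult.commute)
  moreover have "(cmod (1 - w^n))^2 = (cmod (1-w))^2 * (cmod A)^2" by (simp add: eA norm_mult power_mult_distrib)
  ultimately have L: "real n * ((1 - (cmod (w^n))^2) / (cmod (1 - w^n))^2) = (1 - r^2) * (real n * S) / ((cmod (1-w))^2 * (cmod A)^2)"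
    by simp
  have "(cmod A)^2 \<le> Ar^2" using nA by (simp add: power_mono)
  hence "(cmod A)^2 \<le> real n * S" using CS by linarith
  hence "(1 - r^2) * (cmod A)^2 \<le> (1 - r^2) * (real n * S)" using g by (rule mult_left_mono)
  hence "(1 - r^2) \<le> (1 - r^2) * (real n * S) / (cmod A)^2"
    using cA by (simp add: le_divide_eq)
  hence "(1 - r^2) / (cmod (1-w))^2 \<le> (1 - r^2) * (real n * S) / (cmod A)^2 / (cmod (1-w))^2"
    by (rule divide_right_mono) simp
  hence "(1 - r^2) / (cmod (1-w))^2 \<le> (1 - r^2) * (real n * S) / ((cmod (1-w))^2 * (cmod A)^2)"
    by (simp add: divide_divide_eq_left mult.commute)
  thus ?thesis using L r_def by simp
qed

lemma cball_basic:
  assumes "z \<in> cball (-3/4) (3/4)" "z \<noteq> 0"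
  shows "cmod (1+z) < 1" "cmod z \<le> 3/2" "1 - cmod (1+z) \<ge> (cmod z)^2/6"
proof -
  have h: "(cmod z)^2 + 3/2 * Re z \<le> 0" using assms dist_sq[of z] sq_le_iff[of "dist (-3/4) z" "3/4"]
    by (simp add: power2_eq_square) 
  have e1: "(cmod (1+z))^2 = (cmod z)^2 + 2 * Re z + 1"
    unfolding cmod_power2 by (simp add: power2_eq_square algebra_simps)
  have zp: "(cmod z)^2 > 0" using assms by simp
  have a: "(cmod (1+z))^2 \<le> 1 - (cmod z)^2/3" using h e1 by linarith
  hence "(cmod (1+z))^2 < 1" using zp by linarith
  thus "cmod (1+z) < 1" using sq_less_iff[of "cmod (1+z)" 1] by simp
  have "(cmod z)^2 \<le> (3/2)^2"
  proof -
    have "- Re z \<le> cmod z" using abs_Re_le_cmod[of z] by linarith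
    hence "(cmod z)^2 \<le> 3/2 * cmod z" using h by linarith
    hence "cmod z * cmod z \<le> 3/2 * cmod z" by (simp add: power2_eq_square)
    hence "cmod z \<le> 3/2" using zp mult_le_cancel_right_pos[of "cmod z" "cmod z" "3/2"] by simp
    thus ?thesis by (simp add: power_mono)
  qed
  thus "cmod z \<le> 3/2" using sq_le_iff[of "cmod z" "3/2"] by simp
  have "(1 - cmod (1+z)) * (1 + cmod (1+z)) = 1 - (cmod (1+z))^2" by (simp add: algebra_simps power2_eq_square)
  moreover have "1 - cmod (1+z) \<ge> 0" using \<open>(cmod (1+z))^2 < 1\<close> sq_less_iff[of "cmod (1+z)" 1] by simp
  ultimately have "2 * (1 - cmod (1+z)) \<ge> 1 - (cmod (1+z))^2"
    using mult_left_mono[of "1 + cmod (1+z)" 2 "1 - cmod (1+z)"] \<open>cmod (1+z) < 1\<close> by linarith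
  thus "1 - cmod (1+z) \<ge> (cmod z)^2/6" using a by argo
qed

lemma arith2: "\<And>a X. a*((1+X)/2) = a/2 + a*X/(2::real)" by (simp add: field_simps)

lemma Ptilde_props:
  assumes "z \<in> cball (-3/4) (3/4)" "z \<noteq> 0" "n \<ge> 1"
  shows "Ptilde n z \<noteq> 0" "Re (-1 / Ptilde n z) \<ge> Re (-1/z) + (real n - 1)/2"
        "cmod (Ptilde n z) \<ge> (cmod z)^2 / (6 * real n)"
proof -
  define w where "w = 1 + z"
  have w1: "cmod w < 1" using cball_basic[OF assms(1,2)] w_def by auto
  have wn: "cmod (w^n) < 1" using w1 assms(3) by (simp add: norm_power power_less_one_iff)
  hence wn1: "w^n \<noteq> 1" by auto
  have wne: "w \<noteq> 1" using assms w_def by auto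
  have P: "Ptilde n z = (w^n - 1) / of_nat n" unfolding Ptilde_def w_def by simp
  show "Ptilde n z \<noteq> 0" using P wn1 assms(3) by simp
  have m1: "-1 / Ptilde n z = of_nat n * (1 / (1 - w^n))" unfolding P using assms(3) wn1
    by (simp add: field_simps)
  have "Re (-1 / Ptilde n z) = real n * Re (1/(1 - w^n))" unfolding m1 by (simp only: times_complex.sel complex_Re_of_nat complex_Im_of_nat)
  also have "\<dots> = real n * ((1 + (1 - (cmod (w^n))^2) / (cmod (1-w^n))^2) / 2)"
    using Re_inv_one_minus[OF wn1] by simp
  also have "\<dots> = real n / 2 + real n * ((1 - (cmod (w^n))^2) / (cmod (1-w^n))^2) / 2"
    using arith2 by blast
  finally have r1: "Re (-1 / Ptilde n z) = real n / 2 + real n * ((1 - (cmod (w^n))^2) / (cmod (1-w^n))^2) / 2" .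
  have "-1/z = 1/(1-w)" unfolding w_def by simp
  hence r2: "Re (-1/z) = (1 + (1 - (cmod w)^2) / (cmod (1-w))^2) / 2"
    using Re_inv_one_minus[OF wne] by simp
  show "Re (-1 / Ptilde n z) \<ge> Re (-1/z) + (real n - 1)/2"
  proof -
    define Q where "Q = (1 - (cmod w)^2) / (cmod (1-w))^2"
    define R where "R = real n * ((1 - (cmod (w^n))^2) / (cmod (1-w^n))^2)"
    have "Q \<le> R" using key_ineq[OF w1 assms(3)] Q_def R_def by simp
    moreover have "Re (-1 / Ptilde n z) = real n / 2 + R / 2" using r1 R_def by simp
    moreover have "Re (-1/z) = (1 + Q)/2" using r2 Q_def by simp
    ultimately show ?thesis by (simp add: field_simps)
  qed
  have "cmod (Ptilde n z) = cmod (1 - w^n) / real n" unfolding P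
    by (simp add: norm_divide norm_minus_commute)
  moreover have "cmod (1 - w^n) \<ge> 1 - cmod w"
  proof -
    have "cmod (w^n) \<le> cmod w" using w1 assms(3)
      using power_decreasing[of 1 n "cmod w"] by (simp add: norm_power)
    moreover have "cmod (1 - w^n) \<ge> 1 - cmod (w^n)" using norm_triangle_ineq2[of 1 "w^n"] by simp
    ultimately show ?thesis by linarith
  qed
  moreover have "1 - cmod w \<ge> (cmod z)^2/6" using cball_basic[OF assms(1,2)] w_def by simp
  ultimately show "cmod (Ptilde n z) \<ge> (cmod z)^2 / (6 * real n)" using assms(3)
    by (simp add: field_simps)
qed

lemma perturb:
  fixes v a :: complex
  assumes v1: "cmod v \<ge> 1" and e: "cmod a * (cmod v)^2 \<le> 1/36"
  shows "1 - a * v \<noteq> 0" "Re ((1 - a) * v / (1 - a * v)) \<ge> Re v - 1/4"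
proof -
  have av: "cmod a * cmod v \<le> 1/36"
  proof -
    have "cmod a * cmod v \<le> cmod a * (cmod v)^2"
      using v1 by (intro mult_left_mono) (auto simp: power2_eq_square intro: order_trans[OF _ mult_right_mono[of 1 "cmod v" "cmod v", simplified]])
    thus ?thesis using e by linarith
  qed
  have d: "cmod (1 - a * v) \<ge> 35 / 36"
    using norm_triangle_ineq2[of 1 "a * v"] av by (simp add: norm_mult)
  thus "1 - a * v \<noteq> 0" by auto
  have eq: "(1 - a) * v / (1 - a * v) = v + v * a * (v - 1) / (1 - a * v)"
    using \<open>1 - a * v \<noteq> 0\<close> by (simp add: field_simps)
  have nv1: "cmod (v - 1) \<le> 2 * cmod v" using norm_triangle_ineq4[of v 1] v1 by simp
  have "cmod (v * a * (v - 1)) \<le> cmod v * cmod a * (2 * cmod v)"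
    by (simp add: norm_mult mult_left_mono nv1)
  also have "\<dots> = 2 * (cmod a * (cmod v)^2)" by (simp add: power2_eq_square)
  also have "\<dots> \<le> 2/36" using e by linarith
  finally have num: "cmod (v * a * (v - 1)) \<le> 2/36" .
  have "cmod (v * a * (v - 1) / (1 - a * v)) = cmod (v * a * (v - 1)) / cmod (1 - a * v)"
    by (simp add: norm_divide)
  also have "\<dots> \<le> (2/36) / (35/36)"
    using num d by (intro frac_le) auto
  finally have "cmod (v * a * (v - 1) / (1 - a * v)) \<le> 1/4" by simp
  hence "Re (v * a * (v - 1) / (1 - a * v)) \<ge> -1/4"
    using abs_Re_le_cmod[of "v * a * (v - 1) / (1 - a * v)"] by linarith
  thus "Re ((1 - a) * v / (1 - a * v)) \<ge> Re v - 1/4" unfolding eq by simp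
qed

lemma cball_norm: "z \<in> cball (-3/4) (3/4) \<Longrightarrow> cmod z \<le> 3/2"
proof -
  assume "z \<in> cball (-3/4) (3/4)"
  hence "cmod (z + 3/4) \<le> 3/4" by (simp add: dist_norm norm_minus_commute add.commute)
  moreover have "cmod z \<le> cmod (z + 3/4) + cmod (3/4::complex)"
    using norm_triangle_ineq4[of "z + 3/4" "3/4"] by simp
  ultimately show ?thesis by simp
qed

lemma small_bound:
  fixes L :: real
  assumes "n \<ge> 2" "0 \<le> L" "L < 1 / (3 * real n)"
  shows "54 * (real n)^2 * L^5 \<le> 1/36"
proof -
  have n2: "real n \<ge> 2" using assms by simp
  have nL: "real n * L \<le> 1/3" using assms n2 by (simp add: field_simps)
  have nL2: "(real n * L)^2 \<le> (1/3)^2" using nL assms n2 by (intro power_mono) auto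
  have L6: "L \<le> 1/6"
  proof -
    have "2 * L \<le> real n * L" using n2 assms by (intro mult_right_mono) auto
    thus ?thesis using nL by linarith
  qed
  have L3: "L^3 \<le> (1/6)^3" using L6 assms by (intro power_mono) auto
  have "(real n)^2 * L^5 = (real n * L)^2 * L^3" by (simp add: power2_eq_square power_mult_distrib eval_nat_numeral)
  also have "\<dots> \<le> (1/3)^2 * (1/6)^3" using nL2 L3 assms(2) by (intro mult_mono) auto
  also have "\<dots> = 1/1944" by (simp add: power_divide)
  finally show ?thesis by simp
qed

lemma Plam_props:
  assumes z: "z \<in> cball (-3/4) (3/4)" and n: "n \<ge> 2" and mn: "m + n \<ge> 5"
    and lam: "cmod lam < 1 / (3 * real n)"
  shows "1 - lam^(m+n) * z^(m+n) \<noteq> 0"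
    and "z \<noteq> 0 \<Longrightarrow> Plam m n lam z \<noteq> 0 \<and> Re (-1 / Plam m n lam z) \<ge> Re (-1/z) + 1/4"
proof -
  define a where "a = lam^(m+n) * z^(m+n)"
  define L where "L = cmod lam"
  have n2: "real n \<ge> 2" using n by simp
  have L0: "0 \<le> L" using L_def by simp
  have lz: "cmod (lam * z) \<le> L * (3/2)"
    unfolding L_def norm_mult using cball_norm[OF z] by (intro mult_left_mono) auto
  have "L * (3/2) \<le> 1/4"
  proof -
    have "L \<le> 1/6"
    proof -
      have "real n * L < 1/3" using lam L_def n2 by (simp add: field_simps)
      moreover have "2 * L \<le> real n * L" using n2 L0 by (intro mult_right_mono) auto
      ultimately show ?thesis by linarith
    qed
    thus ?thesis by simp
  qed
  hence lz1: "cmod (lam * z) \<le> 1/4" using lz by linarith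
  have na: "cmod a = cmod (lam * z) ^ (m+n)" unfolding a_def by (simp add: norm_mult norm_power power_mult_distrib)
  have a5: "cmod a \<le> cmod (lam * z) ^ 5"
    unfolding na using lz1 mn by (intro power_decreasing) auto
  have "cmod (lam * z) ^ 5 \<le> cmod (lam * z) ^ 1" using lz1 by (intro power_decreasing) auto
  hence a1: "cmod a < 1" using a5 lz1 by simp
  hence a1': "1 - a \<noteq> 0" by auto
  thus "1 - lam^(m+n) * z^(m+n) \<noteq> 0" unfolding a_def .
  assume z0: "z \<noteq> 0"
  define P where "P = Ptilde n z"
  have P0: "P \<noteq> 0" and Pq: "Re (-1 / P) \<ge> Re (-1/z) + (real n - 1)/2"
    and Pn: "cmod P \<ge> (cmod z)^2 / (6 * real n)"
    using Ptilde_props[OF z z0] n P_def by auto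
  define v where "v = -1 / P"
  have v0: "v \<noteq> 0" using P0 v_def by simp
  have qz: "Re (-1/z) \<ge> 2/3" using cball_char[OF z0] z by simp
  have Rv: "Re v \<ge> Re (-1/z) + 1/2" using Pq n2 v_def by (simp add: field_simps)
  have v1: "cmod v \<ge> 1" using complex_Re_le_cmod[of v] Rv qz by linarith
  have zp: "cmod z > 0" using z0 by simp
  have nv: "cmod v \<le> 6 * real n / (cmod z)^2"
  proof -
    have "cmod v = 1 / cmod P" unfolding v_def by (simp add: norm_divide)
    also have "\<dots> \<le> 1 / ((cmod z)^2 / (6 * real n))"
      using Pn zp n2 P0 by (intro divide_left_mono) auto
    finally show ?thesis by simp
  qed
  have nv2: "(cmod v)^2 \<le> (6 * real n / (cmod z)^2)^2" using nv by (intro power_mono) auto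
  have e: "cmod a * (cmod v)^2 \<le> 1/36"
  proof -
    have "cmod a * (cmod v)^2 \<le> cmod (lam * z) ^ 5 * (6 * real n / (cmod z)^2)^2"
      using a5 nv2 by (intro mult_mono) auto
    also have "\<dots> = 36 * (real n)^2 * L^5 * cmod z"
      using zp unfolding L_def norm_mult by (simp add: field_simps power2_eq_square eval_nat_numeral)
    also have "\<dots> \<le> 36 * (real n)^2 * L^5 * (3/2)"
      using cball_norm[OF z] L0 by (intro mult_left_mono) auto
    also have "\<dots> = 54 * (real n)^2 * L^5" by simp
    also have "\<dots> \<le> 1/36" using small_bound[OF n L0] lam L_def by simp
    finally show ?thesis .
  qed
  have av: "1 - a * v \<noteq> 0" and Re1: "Re ((1 - a) * v / (1 - a * v)) \<ge> Re v - 1/4"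
    using perturb[OF v1 e] by auto
  have Pv: "P = -1 / v" unfolding v_def using P0 by simp
  have Pl: "Plam m n lam z = (P + a) / (1 - a)"
    unfolding Plam_def P_def Ptilde_def a_def by simp
  have Pl2: "Plam m n lam z = (a * v - 1) / (v * (1 - a))"
    unfolding Pl Pv using v0 a1' by (simp add: field_simps)
  have "Plam m n lam z \<noteq> 0" unfolding Pl2 using v0 a1' av by (simp add: right_diff_distrib)
  moreover have "-1 / Plam m n lam z = (1 - a) * v / (1 - a * v)"
    unfolding Pl2 using v0 a1' av by (simp add: field_simps)
  ultimately show "Plam m n lam z \<noteq> 0 \<and> Re (-1 / Plam m n lam z) \<ge> Re (-1/z) + 1/4"
    using Re1 Rv by simp
qed

theorem lemma4p1:
  fixes m n :: nat and lam :: complex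
  assumes "m \<ge> 2" and "n \<ge> 2" and "1 / real m + 1 / real n < 1"
  shows "Ptilde n ` closure Delta \<subseteq> Delta \<union> {0}
       \<and> (lam \<noteq> 0 \<and> norm lam < 1 / (3 * real n) \<longrightarrow>
           (\<forall>z \<in> closure Delta. 1 - lam ^ (m + n) * z ^ (m + n) \<noteq> 0)
         \<and> Plam m n lam ` closure Delta \<subseteq> Delta \<union> {0}
         \<and> (\<forall>K. compact K \<and> K \<subseteq> Delta \<longrightarrow>
               uniform_limit K (\<lambda>k z. (Plam m n lam ^^ k) z) (\<lambda>z. 0) sequentially))"
proof -
  have cl: "closure Delta = cball (-3/4) (3/4)" unfolding Delta_def by simp
  have mn: "m + n \<ge> 5"
  proof (rule ccontr)
    assume "\<not> m + n \<ge> 5"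
    hence "m = 2" "n = 2" using assms(1,2) by auto
    thus False using assms(3) by simp
  qed
  have part1: "Ptilde n ` closure Delta \<subseteq> Delta \<union> {0}"
  proof
    fix p assume "p \<in> Ptilde n ` closure Delta"
    then obtain z where z: "z \<in> cball (-3/4) (3/4)" and p: "p = Ptilde n z" using cl by auto
    show "p \<in> Delta \<union> {0}"
    proof (cases "z = 0")
      case True thus ?thesis using p by (simp add: Ptilde_def)
    next
      case False
      have n1: "n \<ge> 1" using assms by simp
      have "Re (-1/z) \<ge> 2/3" using cball_char[OF False] z by simp
      moreover have "Re (-1 / p) \<ge> Re (-1/z) + (real n - 1)/2" "p \<noteq> 0"
        using Ptilde_props[OF z False n1] p by auto
      moreover have "(real n - 1)/2 \<ge> 1/2" using assms by simp
      ultimately have "Re (-1/p) > 2/3" by linarith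
      thus ?thesis using ball_char[OF \<open>p \<noteq> 0\<close>] unfolding Delta_def by simp
    qed
  qed
  have part2: "(\<forall>z \<in> closure Delta. 1 - lam ^ (m + n) * z ^ (m + n) \<noteq> 0)
         \<and> Plam m n lam ` closure Delta \<subseteq> Delta \<union> {0}
         \<and> (\<forall>K. compact K \<and> K \<subseteq> Delta \<longrightarrow>
               uniform_limit K (\<lambda>k z. (Plam m n lam ^^ k) z) (\<lambda>z. 0) sequentially)"
    if lam: "norm lam < 1 / (3 * real n)"
  proof (intro conjI allI impI)
    show "\<forall>z \<in> closure Delta. 1 - lam ^ (m + n) * z ^ (m + n) \<noteq> 0"
      using Plam_props(1)[OF _ assms(2) mn lam] cl by auto
    show "Plam m n lam ` closure Delta \<subseteq> Delta \<union> {0}"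
    proof
      fix p assume "p \<in> Plam m n lam ` closure Delta"
      then obtain z where z: "z \<in> cball (-3/4) (3/4)" and p: "p = Plam m n lam z" using cl by auto
      show "p \<in> Delta \<union> {0}"
      proof (cases "z = 0")
        case True
        have mn0: "m + n > 0" using mn by linarith
        have "(0::complex) ^ (m + n) = 0" by (rule zero_power[OF mn0])
        thus ?thesis using p True by (simp add: Plam_def)
      next
        case False
        have "Re (-1/z) \<ge> 2/3" using cball_char[OF False] z by simp
        moreover have "Re (-1 / p) \<ge> Re (-1/z) + 1/4" "p \<noteq> 0"
          using Plam_props(2)[OF z assms(2) mn lam False] p by auto
        ultimately have "Re (-1/p) > 2/3" by linarith
        thus ?thesis using ball_char[OF \<open>p \<noteq> 0\<close>] unfolding Delta_def by simp
      qed
    qed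
    fix K assume K: "compact K \<and> K \<subseteq> Delta"
    define f where "f = Plam m n lam"
    have it: "(f ^^ k) z \<noteq> 0 \<and> (f ^^ k) z \<in> cball (-3/4) (3/4) \<and> Re (-1 / (f ^^ k) z) \<ge> 2/3 + real k / 4"
      if zD: "z \<in> Delta" for z k
    proof (induction k)
      case 0
      have "z \<noteq> 0" using zD unfolding Delta_def by auto
      moreover have "z \<in> cball (-3/4) (3/4)" using zD unfolding Delta_def by auto
      ultimately show ?case using cball_char by simp
    next
      case (Suc k)
      define y where "y = (f ^^ k) z"
      have y: "y \<noteq> 0" "y \<in> cball (-3/4) (3/4)" "Re (-1/y) \<ge> 2/3 + real k / 4"
        using Suc y_def by auto
      have fy: "f y \<noteq> 0" "Re (-1 / f y) \<ge> Re (-1/y) + 1/4"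
        using Plam_props(2)[OF y(2) assms(2) mn lam y(1)] f_def by auto
      have sk: "real (Suc k) / 4 = real k / 4 + 1/4" by (simp add: add_divide_distrib)
      have "Re (-1 / f y) \<ge> 2/3 + real (Suc k) / 4" unfolding sk using fy(2) y(3) by argo
      moreover have "Re (-1 / f y) \<ge> 2/3" using calculation by (smt (verit) of_nat_0_le_iff divide_nonneg_nonneg)
      hence "f y \<in> cball (-3/4) (3/4)"
        using cball_char[OF fy(1)] by simp
      ultimately show ?case using fy(1) y_def by simp
    qed
    show "uniform_limit K (\<lambda>k z. (Plam m n lam ^^ k) z) (\<lambda>z. 0) sequentially"
      unfolding uniform_limit_iff
    proof (intro allI impI)
      fix e :: real assume e: "e > 0"
      obtain N :: nat where N: "4 / e < real N" using reals_Archimedean2 by blast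
      show "\<forall>\<^sub>F k in sequentially. \<forall>z\<in>K. dist ((Plam m n lam ^^ k) z) 0 < e"
        unfolding eventually_sequentially
      proof (intro exI allI impI ballI)
        fix k z assume k: "N \<le> k" and zK: "z \<in> K"
        have zD: "z \<in> Delta" using zK K by auto
        have h: "(f ^^ k) z \<noteq> 0" "Re (-1 / (f ^^ k) z) \<ge> 2/3 + real k / 4"
          using it[OF zD] by auto
        have q: "Re (-1 / (f ^^ k) z) > 1/e"
        proof -
          have "1/e < real N / 4" using N e by (simp add: field_simps)
          also have "\<dots> \<le> real k / 4" using k by simp
          finally show ?thesis using h(2) by linarith
        qed
        have qp: "Re (-1 / (f ^^ k) z) > 0" using q e by (smt (verit) divide_pos_pos)
        have "cmod ((f ^^ k) z) \<le> 1 / Re (-1 / (f ^^ k) z)" using norm_le_q[OF h(1) qp] .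
        also have "\<dots> < e"
        proof -
          have "1 < e * Re (-1 / (f ^^ k) z)" using q e by (simp add: field_simps)
          thus ?thesis using qp by (simp add: field_simps)
        qed
        finally show "dist ((Plam m n lam ^^ k) z) 0 < e" using f_def e by simp
      qed
    qed
  qed
  show ?thesis using part1 part2 by blast
qed

end
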